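(* Let $n\geq 3$. There is no u-p-word for $n$-permutations of the form $u=\Diamond u_2u_3\cdots u_N$ containing exactly one $\Diamond$ (that is, with $u_2,\ldots,u_N$ all integers).
   Context: An $n$-permutation is a permutation of $\{1,\ldots,n\}$. For a word $w$ of distinct numbers, $\mathrm{red}(w)$ is obtained by replacing the $i$-th smallest letter by $i$. Let $\Diamond$ be a symbol not among the integers. A word $f=f_1\cdots f_n$ over the positive integers together with $\Diamond$, whose integer letters are pairwise distinct, covers an $n$-permutation $\pi$ if one can substitute real numbers for the occurrences of $\Diamond$ (independently) so that the resulting word has $n$ pairwise distinct entries and reduces to $\pi$; equivalently, $f_i<f_j\iff\pi_i<\pi_j$ for all positions $i,j$ holding integers. A u-p-word for $n$-permutations is a word $u_1\cdots u_N$, $N\geq n$, over this alphabet containing at least one $\Diamond$, such that every factor $u_i\cdots u_{i+n-1}$ ($1\leq i\leq N-n+1$) has pairwise distinct integer letters and every $n$-permutation is covered by exactly one of these factors. *)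

theory Defs
  imports Complex_Main
begin

text \<open>Letters: \<open>None\<close> is the diamond symbol, \<open>Some k\<close> is the positive integer k (k \<ge> 1).
Words and permutations are lists; positions are 0-based.\<close>

type_synonym letter = "nat option"

definition is_perm :: "nat \<Rightarrow> nat list \<Rightarrow> bool" where
  "is_perm n p \<longleftrightarrow> length p = n \<and> distinct p \<and> set p = {1..n}"

definition int_letters_distinct :: "letter list \<Rightarrow> bool" where
  "int_letters_distinct w \<longleftrightarrow> distinct (filter (\<lambda>x. x \<noteq> None) w)"

definition covers :: "letter list \<Rightarrow> nat list \<Rightarrow> bool" where
  "covers f p \<longleftrightarrow> length f = length p \<and>
     (\<exists>r :: real list. length r = length f \<and> distinct r \<and>
        (\<forall>i < length f. \<forall>a. f ! i = Some a \<longrightarrow> r ! i = real a) \<and>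
        (\<forall>i < length f. \<forall>j < length f. r ! i < r ! j \<longleftrightarrow> p ! i < p ! j))"

definition factor :: "letter list \<Rightarrow> nat \<Rightarrow> nat \<Rightarrow> letter list" where
  "factor u i n = take n (drop i u)"

definition upword :: "nat \<Rightarrow> letter list \<Rightarrow> bool" where
  "upword n u \<longleftrightarrow> length u \<ge> n \<and> None \<in> set u \<and> Some 0 \<notin> set u \<and>
     (\<forall>i \<le> length u - n. int_letters_distinct (factor u i n)) \<and>
     (\<forall>p. is_perm n p \<longrightarrow> (\<exists>!i. i \<le> length u - n \<and> covers (factor u i n) p))"

end

theory Submission
  imports Defs
begin

lemma sep_reals:
  fixes A B :: "real set"
  assumes "finite A" "finite B" "\<forall>a\<in>A. \<forall>b\<in>B. a < b"
  shows "\<exists>x. (\<forall>a\<in>A. a < x) \<and> (\<forall>b\<in>B. x < b)"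
proof (cases "A = {}")
  case True
  show ?thesis
  proof (cases "B = {}")
    case True
    then show ?thesis using \<open>A = {}\<close> by auto
  next
    case False
    then show ?thesis using \<open>A = {}\<close> assms(2)
      by (intro exI[of _ "Min B - 1"]) (auto dest: Min_le)
  qed
next
  case False
  show ?thesis
  proof (cases "B = {}")
    case True
    then show ?thesis using \<open>A \<noteq> {}\<close> assms(1)
      by (intro exI[of _ "Max A + 1"]) (auto dest: Max_ge)
  next
    case False
    have "Max A < Min B" using \<open>A \<noteq> {}\<close> \<open>B \<noteq> {}\<close> assms by auto
    have "\<forall>a\<in>A. a \<le> Max A" "\<forall>b\<in>B. Min B \<le> b" using assms(1,2) by auto
    then show ?thesis using \<open>Max A < Min B\<close>
      by (intro exI[of _ "(Max A + Min B) / 2"]) force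
  qed
qed

lemma rank_perm:
  fixes h :: "nat \<Rightarrow> real"
  assumes inj: "inj_on h {..<n}"
  shows "\<exists>q. is_perm n q \<and> (\<forall>j<n. \<forall>k<n. q!j < q!k \<longleftrightarrow> h j < h k)"
proof -
  define rk where "rk j = card {k\<in>{..<n}. h k < h j} + 1" for j
  have mono: "rk j < rk k" if "h j < h k" "j < n" for j k
  proof -
    have "{m\<in>{..<n}. h m < h j} \<subseteq> {m\<in>{..<n}. h m < h k}"
      using that by auto
    moreover have "j \<in> {m\<in>{..<n}. h m < h k}" "j \<notin> {m\<in>{..<n}. h m < h j}" using that by auto
    ultimately have "{m\<in>{..<n}. h m < h j} \<subset> {m\<in>{..<n}. h m < h k}"
      by blast
    then have "card {m\<in>{..<n}. h m < h j} < card {m\<in>{..<n}. h m < h k}"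
      by (intro psubset_card_mono) auto
    then show ?thesis unfolding rk_def by simp
  qed
  have iff: "rk j < rk k \<longleftrightarrow> h j < h k" if "j < n" "k < n" for j k
  proof
    assume "rk j < rk k"
    show "h j < h k"
    proof (rule ccontr)
      assume "\<not> h j < h k"
      then have "h k < h j \<or> h k = h j" by auto
      then show False
      proof
        assume "h k < h j" then have "rk k < rk j" using mono[of k j] that by blast
        then show False using \<open>rk j < rk k\<close> by simp
      next
        assume "h k = h j" then have "k = j" using inj that by (auto dest: inj_onD)
        then show False using \<open>rk j < rk k\<close> by simp
      qed
    qed
  qed (use mono[of j k] that in blast)
  have bound: "rk j \<in> {1..n}" if "j < n" for j
  proof -
    have "{k\<in>{..<n}. h k < h j} \<subseteq> {..<n} - {j}" by auto
    then have "card {k\<in>{..<n}. h k < h j} \<le> card ({..<n} - {j})"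
      by (intro card_mono) auto
    also have "\<dots> = n - 1" using that by simp
    finally show ?thesis unfolding rk_def using that by auto
  qed
  define q where "q = map rk [0..<n]"
  have len: "length q = n" unfolding q_def by simp
  have dq: "distinct q"
    unfolding q_def distinct_conv_nth
  proof (intro allI impI)
    fix i j assume "i < length (map rk [0..<n])" "j < length (map rk [0..<n])" "i \<noteq> j"
    then have "i < n" "j < n" "i \<noteq> j" by auto
    then have "h i \<noteq> h j" using inj by (auto dest: inj_onD)
    then have "h i < h j \<or> h j < h i" by auto
    then have "rk i \<noteq> rk j" using iff[OF \<open>i<n\<close> \<open>j<n\<close>] iff[OF \<open>j<n\<close> \<open>i<n\<close>] by auto
    then show "map rk [0..<n] ! i \<noteq> map rk [0..<n] ! j" using \<open>i<n\<close> \<open>j<n\<close> by simp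
  qed
  have sub: "set q \<subseteq> {1..n}" unfolding q_def using bound by auto
  have "card (set q) = n" using dq len distinct_card by metis
  then have "set q = {1..n}" using sub by (intro card_subset_eq) auto
  then have "is_perm n q" unfolding is_perm_def using len dq by simp
  moreover have "\<forall>j<n. \<forall>k<n. q!j < q!k \<longleftrightarrow> h j < h k"
    unfolding q_def using iff by simp
  ultimately show ?thesis by blast
qed

lemma insert_real:
  fixes g h :: "nat \<Rightarrow> real"
  assumes injh: "inj_on h {..<n}" and injg: "inj_on g {1..<n}"
    and ord: "\<forall>j k. 1 \<le> j \<longrightarrow> j < n \<longrightarrow> 1 \<le> k \<longrightarrow> k < n \<longrightarrow> (g j < g k \<longleftrightarrow> h j < h k)"
  shows "\<exists>x. inj_on (g(0:=x)) {..<n} \<and> (\<forall>j<n. \<forall>k<n. ((g(0:=x)) j < (g(0:=x)) k \<longleftrightarrow> h j < h k))"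
proof -
  define A where "A = g ` {j\<in>{1..<n}. h j < h 0}"
  define B where "B = g ` {j\<in>{1..<n}. h 0 < h j}"
  have "finite A" "finite B" unfolding A_def B_def by auto
  have "\<forall>a\<in>A. \<forall>b\<in>B. a < b"
    unfolding A_def B_def using ord by auto
  then obtain x where xA: "\<forall>a\<in>A. a < x" and xB: "\<forall>b\<in>B. x < b"
    using sep_reals[of A B] \<open>finite A\<close> \<open>finite B\<close> by blast
  have tri: "h j < h 0 \<or> h 0 < h j" if "1 \<le> j" "j < n" for j
  proof -
    have "h j \<noteq> h 0" using injh that by (auto dest: inj_onD)
    then show ?thesis by auto
  qed
  have c1: "(x < g j \<longleftrightarrow> h 0 < h j) \<and> (g j < x \<longleftrightarrow> h j < h 0) \<and> g j \<noteq> x"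
    if "1 \<le> j" "j < n" for j
    using tri[OF that] xA xB that unfolding A_def B_def by force
  let ?G = "g(0:=x)"
  have o: "?G j < ?G k \<longleftrightarrow> h j < h k" if "j<n" "k<n" for j k
  proof (cases "j = 0")
    case True
    then show ?thesis using c1[of k] that by (cases "k = 0") auto
  next
    case False
    then show ?thesis using c1[of j] ord that by (cases "k = 0") auto
  qed
  have "inj_on ?G {..<n}"
  proof (rule inj_onI)
    fix j k assume "j \<in> {..<n}" "k \<in> {..<n}" "?G j = ?G k"
    then have "\<not> h j < h k" "\<not> h k < h j" using o[of j k] o[of k j] by auto
    then have "h j = h k" by auto
    then show "j = k" using injh \<open>j \<in> {..<n}\<close> \<open>k \<in> {..<n}\<close> by (auto dest: inj_onD)
  qed
  then show ?thesis using o by blast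
qed

lemma filter_distinct_nth:
  assumes "distinct (filter P xs)" "j < length xs" "k < length xs" "j \<noteq> k" "P (xs!j)" "P (xs!k)"
  shows "xs!j \<noteq> xs!k"
  using assms
proof (induction xs arbitrary: j k)
  case Nil then show ?case by simp
next
  case (Cons y ys)
  show ?case
  proof (cases "j = 0")
    case True
    then obtain k' where "k = Suc k'" using Cons by (cases k) auto
    then have "ys!k' \<in> set (filter P ys)" using Cons by auto
    then show ?thesis using Cons True \<open>k = Suc k'\<close> by auto
  next
    case False
    then obtain j' where j': "j = Suc j'" by (cases j) auto
    show ?thesis
    proof (cases "k = 0")
      case True
      then have "ys!j' \<in> set (filter P ys)" using Cons j' by auto
      then show ?thesis using Cons True j' by auto
    next
      case False
      then obtain k' where "k = Suc k'" by (cases k) auto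
      then show ?thesis using Cons j' by (auto split: if_splits)
    qed
  qed
qed

lemma cov_ord:
  assumes "covers f p" "j < length f" "k < length f" "f!j = Some a" "f!k = Some b"
  shows "p!j < p!k \<longleftrightarrow> real a < real b"
proof -
  obtain r :: "real list" where r: "length r = length f"
    "\<forall>i < length f. \<forall>a. f ! i = Some a \<longrightarrow> r ! i = real a"
    "\<forall>i < length f. \<forall>j < length f. r ! i < r ! j \<longleftrightarrow> p ! i < p ! j"
    using assms(1) unfolding covers_def by blast
  then show ?thesis using assms by metis
qed

lemma cov_intro:
  fixes r :: "nat \<Rightarrow> real"
  assumes "length f = n" "length p = n" "inj_on r {..<n}"
    "\<forall>i<n. \<forall>a. f!i = Some a \<longrightarrow> r i = real a"
    "\<forall>i<n. \<forall>j<n. r i < r j \<longleftrightarrow> p!i < p!j"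
  shows "covers f p"
  unfolding covers_def
proof (intro conjI exI[of _ "map r [0..<n]"])
  show "distinct (map r [0..<n])" using assms(3)
    by (simp add: distinct_map lessThan_atLeast0)
qed (use assms in auto)

lemma two_points:
  fixes S :: "real set" and a b :: real
  assumes "finite S" "a \<in> S" "b \<in> S" "a \<noteq> b"
  shows "\<exists>x1 x2. x1 \<notin> S \<and> x2 \<notin> S \<and> (x1 < b \<longleftrightarrow> a < b) \<and> (x2 < b \<longleftrightarrow> a < b) \<and> x1 < a \<and> a < x2"
proof (cases "a < b")
  case True
  have f: "finite {y\<in>S. y < b}" "finite {y\<in>S. b \<le> y}" "finite ({}::real set)" using assms(1) by auto
  have "\<forall>a\<in>{}. \<forall>b\<in>S. a < (b::real)" by simp
  then obtain x1 where x1: "\<forall>s\<in>S. x1 < s" using sep_reals[OF f(3) assms(1)] by blast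
  have "\<forall>s\<in>{y\<in>S. y < b}. \<forall>t\<in>{y\<in>S. b \<le> y}. s < t" by auto
  then obtain x2 where x2: "\<forall>s\<in>{y\<in>S. y < b}. s < x2" "\<forall>s\<in>{y\<in>S. b \<le> y}. x2 < s"
    using sep_reals[OF f(1) f(2)] by blast
  have x1S: "x1 \<notin> S" using x1 by blast
  have x2S: "x2 \<notin> S"
  proof
    assume "x2 \<in> S"
    then show False using x2 by (cases "x2 < b") auto
  qed
  have "x2 < b" using x2(2) assms(3) by auto
  moreover have "x1 < b" "x1 < a" using x1 assms(2,3) by auto
  moreover have "a < x2" using x2(1) assms(2) True by auto
  ultimately show ?thesis using True x1S x2S by blast
next
  case False
  then have ba: "b < a" using assms by auto
  have f: "finite {y\<in>S. y \<le> b}" "finite {y\<in>S. b < y}" "finite ({}::real set)" using assms(1) by auto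
  have "\<forall>a\<in>S. \<forall>b\<in>{}. a < (b::real)" by simp
  then obtain x2 where x2: "\<forall>s\<in>S. s < x2" using sep_reals[OF assms(1) f(3)] by blast
  have "\<forall>s\<in>{y\<in>S. y \<le> b}. \<forall>t\<in>{y\<in>S. b < y}. s < t" by auto
  then obtain x1 where x1: "\<forall>s\<in>{y\<in>S. y \<le> b}. s < x1" "\<forall>s\<in>{y\<in>S. b < y}. x1 < s"
    using sep_reals[OF f(1) f(2)] by blast
  have x2S: "x2 \<notin> S" using x2 by blast
  have x1S: "x1 \<notin> S"
  proof
    assume "x1 \<in> S"
    then show False using x1 by (cases "x1 \<le> b") auto
  qed
  have "b < x1" using x1(1) assms(3) by auto
  moreover have "b < x2" "a < x2" using x2 assms(2,3) by auto
  moreover have "x1 < a" using x1(2) assms(2) ba by auto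
  moreover have "\<not> x2 < b" "\<not> x1 < b" using \<open>b < x1\<close> \<open>b < x2\<close> by auto
  ultimately show ?thesis using False x1S x2S by blast
qed

theorem proposition1:
  fixes n :: nat
  assumes "n \<ge> 3"
  shows "\<not> (\<exists>u. upword n u \<and> u \<noteq> [] \<and> hd u = None \<and> (\<forall>x \<in> set (tl u). x \<noteq> None))"
proof
  assume "\<exists>u. upword n u \<and> u \<noteq> [] \<and> hd u = None \<and> (\<forall>x \<in> set (tl u). x \<noteq> None)"
  then obtain u where up: "upword n u" and ne: "u \<noteq> []" and hdu: "hd u = None"
    and tlu: "\<forall>x \<in> set (tl u). x \<noteq> None" by blast
  define N where "N = length u"
  define g where "g j = real (the (u!j))" for j
  have Nn: "n \<le> N" using up unfolding upword_def N_def by auto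
  have u0: "u!0 = None" using ne hdu by (simp add: hd_conv_nth)
  have some: "u!j = Some (the (u!j))" if "1 \<le> j" "j < N" for j
  proof -
    have "u!j = tl u ! (j - 1)" using that ne by (cases u) (auto simp: nth_Cons')
    moreover have "tl u ! (j - 1) \<in> set (tl u)" using that unfolding N_def by (intro nth_mem) auto
    ultimately show ?thesis using tlu by auto
  qed
  have fnth: "factor u i n ! j = u!(i+j)" if "i + n \<le> N" "j < n" for i j
    using that unfolding factor_def N_def by simp
  have flen: "length (factor u i n) = n" if "i + n \<le> N" for i
    using that unfolding factor_def N_def by simp
  have dist: "g (i+j) \<noteq> g (i+k)"
    if "i + n \<le> N" "j < n" "k < n" "j \<noteq> k" "1 \<le> i+j" "1 \<le> i+k" for i j k
  proof -
    have "i \<le> length u - n" using that unfolding N_def by auto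
    then have ild: "int_letters_distinct (factor u i n)" using up unfolding upword_def by auto
    have lt: "i+j < N" "i+k < N" using that by auto
    have nn: "u!(i+j) \<noteq> None" "u!(i+k) \<noteq> None"
      using some[of "i+j"] some[of "i+k"] that(5,6) lt by (metis option.distinct(1))+
    have "factor u i n ! j \<noteq> factor u i n ! k"
    proof (rule filter_distinct_nth[where P="\<lambda>x. x \<noteq> None"])
      show "distinct (filter (\<lambda>x. x \<noteq> None) (factor u i n))"
        using ild unfolding int_letters_distinct_def .
    qed (use that flen fnth nn in auto)
    then have "u!(i+j) \<noteq> u!(i+k)" using fnth that by auto
    then have "the (u!(i+j)) \<noteq> the (u!(i+k))" using nn by (metis option.expand)
    then show ?thesis unfolding g_def by simp
  qed
  have cov_int: "p!j < p!k \<longleftrightarrow> g (i+j) < g (i+k)"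
    if "1 \<le> i" "i + n \<le> N" "covers (factor u i n) p" "j < n" "k < n" for i p j k
  proof -
    have "factor u i n ! j = Some (the (u!(i+j)))" "factor u i n ! k = Some (the (u!(i+k)))"
      using fnth some that by auto
    then show ?thesis using cov_ord[OF that(3)] flen that unfolding g_def by auto
  qed
  have cov0: "p!j < p!k \<longleftrightarrow> g j < g k"
    if "covers (factor u 0 n) p" "1 \<le> j" "j < n" "1 \<le> k" "k < n" for p j k
  proof -
    have "factor u 0 n ! j = Some (the (u!j))" "factor u 0 n ! k = Some (the (u!k))"
      using fnth[of 0] some Nn that by auto
    then show ?thesis using cov_ord[OF that(1)] flen[of 0] Nn that unfolding g_def by auto
  qed
  have uniq: "i = i'" if "is_perm n p" "i + n \<le> N" "i' + n \<le> N"
    "covers (factor u i n) p" "covers (factor u i' n) p" for p i i'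
  proof -
    have "\<exists>!i. i \<le> length u - n \<and> covers (factor u i n) p" using up that(1) unfolding upword_def by auto
    moreover have "i \<le> length u - n" "i' \<le> length u - n" using that unfolding N_def by auto
    ultimately show ?thesis using that(4,5) by blast
  qed
  have ex: "\<exists>i. i + n \<le> N \<and> covers (factor u i n) p" if "is_perm n p" for p
  proof -
    have "\<exists>!i. i \<le> length u - n \<and> covers (factor u i n) p" using up that unfolding upword_def by auto
    then obtain i where "i \<le> length u - n" "covers (factor u i n) p" by auto
    then show ?thesis using Nn unfolding N_def by (intro exI[of _ i]) auto
  qed
  have no_big: False
    if i2: "2 \<le> i" "i + n \<le> N"
      and iso: "\<forall>j<n-1. \<forall>k<n-1. (g (i+j) < g (i+k) \<longleftrightarrow> g (j+1) < g (k+1))" for i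
  proof -
    define h where "h j = g (i - 1 + j)" for j
    have injh: "inj_on h {..<n}"
    proof (rule inj_onI)
      fix j k assume "j \<in> {..<n}" "k \<in> {..<n}" "h j = h k"
      then show "j = k" using dist[of "i-1" j k] i2 unfolding h_def by fastforce
    qed
    obtain q where q: "is_perm n q" "\<forall>j<n. \<forall>k<n. q!j < q!k \<longleftrightarrow> h j < h k"
      using rank_perm[OF injh] by blast
    have lq: "length q = n" using q(1) unfolding is_perm_def by auto
    have c1: "covers (factor u (i-1) n) q"
    proof (rule cov_intro[where r = h])
      show "\<forall>m<n. \<forall>a. factor u (i-1) n ! m = Some a \<longrightarrow> h m = real a"
        using fnth[of "i-1"] i2 unfolding h_def g_def by auto
    qed (use flen[of "i-1"] i2 lq injh q in auto)
    have injg: "inj_on g {1..<n}"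
    proof (rule inj_onI)
      fix j k assume "j \<in> {1..<n}" "k \<in> {1..<n}" "g j = g k"
      then show "j = k" using dist[of 0 j k] Nn by fastforce
    qed
    have ord: "\<forall>j k. 1 \<le> j \<longrightarrow> j < n \<longrightarrow> 1 \<le> k \<longrightarrow> k < n \<longrightarrow> (g j < g k \<longleftrightarrow> h j < h k)"
    proof (intro allI impI)
      fix j k assume jk: "1 \<le> j" "j < n" "1 \<le> k" "k < n"
      obtain j' k' where jk': "j = Suc j'" "k = Suc k'" using jk by (cases j; cases k) auto
      have "h j = g (i + j')" "h k = g (i + k')" unfolding h_def using jk' i2 by simp_all
      moreover have "j' < n - 1" "k' < n - 1" using jk jk' by auto
      ultimately show "g j < g k \<longleftrightarrow> h j < h k" using iso jk' by auto
    qed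
    obtain x where x: "inj_on (g(0:=x)) {..<n}"
      "\<forall>j<n. \<forall>k<n. ((g(0:=x)) j < (g(0:=x)) k \<longleftrightarrow> h j < h k)"
      using insert_real[OF injh injg ord] by blast
    have c0: "covers (factor u 0 n) q"
    proof (rule cov_intro[where r = "g(0:=x)"])
      show "\<forall>m<n. \<forall>a. factor u 0 n ! m = Some a \<longrightarrow> (g(0:=x)) m = real a"
        using fnth[of 0] Nn u0 unfolding g_def by auto
    qed (use flen[of 0] Nn lq x q in auto)
    have b1: "i - 1 + n \<le> N" "0 + n \<le> N" using i2 by auto
    have "i - 1 = 0" using uniq[OF q(1) b1 c1 c0] .
    then show False using i2 by simp
  qed
  define S where "S = g ` {1..<n}"
  have "g (n-2) \<noteq> g (n-1)" using dist[of 0 "n-2" "n-1"] Nn assms by auto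
  then obtain x1 x2 where xs: "x1 \<notin> S" "x2 \<notin> S" "x1 < g (n-1) \<longleftrightarrow> g (n-2) < g (n-1)"
    "x2 < g (n-1) \<longleftrightarrow> g (n-2) < g (n-1)" "x1 < g (n-2)" "g (n-2) < x2"
    using two_points[of S "g (n-2)" "g (n-1)"] assms unfolding S_def by auto
  have gen: "\<exists>p. is_perm n p \<and> covers (factor u 1 n) p \<and> (p!(n-1) < p!(n-3) \<longleftrightarrow> x < g (n-2))"
    if "x \<notin> S" "x < g (n-1) \<longleftrightarrow> g (n-2) < g (n-1)" for x
  proof -
    define w where "w j = (if j < n - 1 then g (j+1) else x)" for j
    have injw: "inj_on w {..<n}"
    proof (rule inj_onI)
      fix j k assume jk: "j \<in> {..<n}" "k \<in> {..<n}" "w j = w k"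
      show "j = k"
      proof (cases "j < n-1")
        case True
        show ?thesis
        proof (cases "k < n-1")
          case True
          show ?thesis
          proof (rule ccontr)
            assume "j \<noteq> k"
            have "j+1 < n" "k+1 < n" using \<open>j < n-1\<close> \<open>k < n-1\<close> by auto
            then have "g (0+(j+1)) \<noteq> g (0+(k+1))" using dist[of 0 "j+1" "k+1"] Nn \<open>j \<noteq> k\<close> by auto
            moreover have "w j = g (j+1)" "w k = g (k+1)" using \<open>j < n-1\<close> \<open>k < n-1\<close> unfolding w_def by auto
            ultimately show False using jk(3) by simp
          qed
        next
          case False
          then show ?thesis using \<open>j < n-1\<close> jk that(1) unfolding w_def S_def by auto
        qed
      next
        case False
        then show ?thesis using jk that(1) unfolding w_def S_def by (cases "k < n-1") auto
      qed
    qed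
    obtain p where p: "is_perm n p" "\<forall>j<n. \<forall>k<n. p!j < p!k \<longleftrightarrow> w j < w k"
      using rank_perm[OF injw] by blast
    have pn: "p!(n-2) < p!(n-1) \<longleftrightarrow> \<not> g (n-2) < g (n-1)"
    proof -
      have "Suc (n-2) = n-1" using assms by auto
      then have "w (n-2) = g (n-1)" "w (n-1) = x" unfolding w_def using assms by auto
      moreover have "x \<noteq> g (n-1)" using that(1) assms unfolding S_def by auto
      ultimately show ?thesis using p(2) assms that(2) by auto
    qed
    have pn3: "p!(n-1) < p!(n-3) \<longleftrightarrow> x < g (n-2)"
    proof -
      have "Suc (n-3) = n-2" using assms by auto
      then have "w (n-3) = g (n-2)" "w (n-1) = x" unfolding w_def using assms by auto
      then show ?thesis using p(2) assms by auto
    qed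
    obtain i where i: "i + n \<le> N" "covers (factor u i n) p" using ex[OF p(1)] by blast
    have "i \<noteq> 0"
    proof
      assume "i = 0"
      then have "p!(n-2) < p!(n-1) \<longleftrightarrow> g (n-2) < g (n-1)"
        using cov0[of p "n-2" "n-1"] i assms by auto
      then show False using pn by auto
    qed
    moreover have "\<not> 2 \<le> i"
    proof
      assume "2 \<le> i"
      have "\<forall>j<n-1. \<forall>k<n-1. (g (i+j) < g (i+k) \<longleftrightarrow> g (j+1) < g (k+1))"
      proof (intro allI impI)
        fix j k assume "j < n-1" "k < n-1"
        then have "p!j < p!k \<longleftrightarrow> g (i+j) < g (i+k)" using cov_int[OF _ i(1) i(2)] \<open>2 \<le> i\<close> by auto
        moreover have "p!j < p!k \<longleftrightarrow> w j < w k" using p(2) \<open>j < n-1\<close> \<open>k < n-1\<close> by auto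
        ultimately show "g (i+j) < g (i+k) \<longleftrightarrow> g (j+1) < g (k+1)"
          using \<open>j < n-1\<close> \<open>k < n-1\<close> unfolding w_def by auto
      qed
      then show False using no_big[OF \<open>2 \<le> i\<close> i(1)] by blast
    qed
    ultimately have "i = 1" by auto
    then show ?thesis using p(1) i(2) pn3 by auto
  qed
  obtain p1 where p1: "is_perm n p1" "covers (factor u 1 n) p1" "p1!(n-1) < p1!(n-3) \<longleftrightarrow> x1 < g (n-2)"
    using gen[OF xs(1) xs(3)] by blast
  obtain p2 where p2: "is_perm n p2" "covers (factor u 1 n) p2" "p2!(n-1) < p2!(n-3) \<longleftrightarrow> x2 < g (n-2)"
    using gen[OF xs(2) xs(4)] by blast
  have "1 + n \<le> N"
  proof -
    obtain i where i: "i + n \<le> N" "covers (factor u i n) p1" using ex[OF p1(1)] by blast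
    show ?thesis
    proof (rule ccontr)
      assume "\<not> 1 + n \<le> N"
      then have "N = n" using Nn by auto
      then have "length (factor u 1 n) \<noteq> length p1"
        using p1(1) assms unfolding factor_def is_perm_def N_def by auto
      then show False using p1(2) unfolding covers_def by auto
    qed
  qed
  have "p1!(n-1) < p1!(n-3) \<longleftrightarrow> g (1+(n-1)) < g (1+(n-3))"
    using cov_int[OF _ \<open>1 + n \<le> N\<close> p1(2)] assms by auto
  moreover have "p2!(n-1) < p2!(n-3) \<longleftrightarrow> g (1+(n-1)) < g (1+(n-3))"
    using cov_int[OF _ \<open>1 + n \<le> N\<close> p2(2)] assms by auto
  ultimately have "(p1!(n-1) < p1!(n-3)) = (p2!(n-1) < p2!(n-3))" by (simp only:)
  then show False using p1(3) p2(3) xs(5,6) by auto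
qed

end
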